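(* Let $f\in\mathcal{C}(1)$ and let $\mathcal{J}=\{I_1,\dots,I_\ell\}$ be finitely many disjoint intervals. Then: (i) $f^{\mathrm{sd},\mathcal{J}}$ is constant on each $I\in\mathcal{J}$; (ii) for all $x,y\in\mathbb{R}$, $f^{\mathrm{sd},\mathcal{J}}(x)\ge f(x)-\sum_{I\in\mathcal{J}}\Delta_I(f)$ and $(f^{\mathrm{sd},\mathcal{J}}(x)-f^{\mathrm{sd},\mathcal{J}}(y))_+\le(f(x)-f(y))_+$. As a consequence, $E(f^{\mathrm{sd},\mathcal{J}})\le E(f)$.
   Context: For $x\in\mathbb{R}$, $\mathbb{P}^{\rm BM}_x$ is the law of one-dimensional Brownian motion $(B_t)$ started at $x$, and $\tau_y:=\inf\{t\ge0:B_t=y\}$. $\mathcal{C}(1)$ is the set of functions $f:\mathbb{R}\to[0,\infty)$ that are non-increasing on $(-\infty,0]$, non-decreasing on $[0,\infty)$, with $\lim_{x\to0}f(x)=0$, $\sup_{\mathbb{R}}f\le1$ and $\lim_{x\to\infty}f(x)=1$; $E(f):=-\int_{\mathbb{R}}\log\mathbb{P}^{\rm BM}_x(\tau_y\ge f(y)-f(x)\ \forall y\in\mathbb{R})\,\mathrm{d}x$. The intervals $I_i$ have endpoints $a_i<b_i$ (possibly $\pm\infty$), open, closed or half-open. For an interval $I$ and a function $g$, $M_I(g):=\sup_{y\in I}g(y)$, $m_I(g):=\inf_{y\in I}g(y)$, $\Delta_I(g):=M_I(g)-m_I(g)$. Soft deformation: $f^{[0]}:=f$ and for $k=1,\dots,\ell$,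 with $m_k:=m_{I_k}(f^{[k-1]})$, $M_k:=M_{I_k}(f^{[k-1]})$, set $f^{[k]}(x):=m_k$ if $f^{[k-1]}(x)\in[m_k,M_k]$, $f^{[k]}(x):=f^{[k-1]}(x)$ if $f^{[k-1]}(x)<m_k$, and $f^{[k]}(x):=f^{[k-1]}(x)-\Delta_{I_k}(f^{[k-1]})$ if $f^{[k-1]}(x)>M_k$. Then $f^{\mathrm{sd},\mathcal{J}}:=f^{[\ell]}$. *)

theory Defs
  imports "HOL-Probability.Probability"
begin

definition classC1 :: "(real \<Rightarrow> real) \<Rightarrow> bool" where
  "classC1 f \<longleftrightarrow> (\<forall>x. 0 \<le> f x) \<and> antimono_on {..0} f \<and> mono_on {0..} f
     \<and> (f \<longlongrightarrow> 0) (at 0) \<and> (\<forall>x. f x \<le> 1) \<and> (f \<longlongrightarrow> 1) at_top"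

definition nondeg_interval :: "real set \<Rightarrow> bool" where
  "nondeg_interval I \<longleftrightarrow> is_interval I \<and> (\<exists>a b. a < b \<and> {a<..<b} \<subseteq> I)"

definition supI :: "real set \<Rightarrow> (real \<Rightarrow> real) \<Rightarrow> real" where
  "supI I g = (SUP y\<in>I. g y)"
definition infI :: "real set \<Rightarrow> (real \<Rightarrow> real) \<Rightarrow> real" where
  "infI I g = (INF y\<in>I. g y)"
definition DeltaI :: "real set \<Rightarrow> (real \<Rightarrow> real) \<Rightarrow> real" where
  "DeltaI I g = supI I g - infI I g"

definition sd_step :: "real set \<Rightarrow> (real \<Rightarrow> real) \<Rightarrow> real \<Rightarrow> real" where
  "sd_step I g x =
     (if infI I g \<le> g x \<and> g x \<le> supI I g then infI I g
      else if g x < infI I g then g x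
      else g x - DeltaI I g)"

definition soft_deform :: "real set list \<Rightarrow> (real \<Rightarrow> real) \<Rightarrow> real \<Rightarrow> real" where
  "soft_deform Is f = foldl (\<lambda>g I. sd_step I g) f Is"

definition is_BM :: "'a measure \<Rightarrow> (real \<Rightarrow> 'a \<Rightarrow> real) \<Rightarrow> real \<Rightarrow> bool" where
  "is_BM M B x \<longleftrightarrow> prob_space M
     \<and> (\<forall>t. B t \<in> borel_measurable M)
     \<and> (\<forall>\<omega>\<in>space M. B 0 \<omega> = x \<and> continuous_on {0..} (\<lambda>t. B t \<omega>))
     \<and> (\<forall>s t. 0 \<le> s \<and> s < t \<longrightarrow>
           distributed M lborel (\<lambda>\<omega>. B t \<omega> - B s \<omega>) (\<lambda>z. ennreal (normal_density 0 (sqrt (t - s)) z)))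
     \<and> (\<forall>(ts::nat \<Rightarrow> real) n. 0 \<le> ts 0 \<and> (\<forall>i<n. ts i < ts (Suc i)) \<longrightarrow>
           prob_space.indep_vars M (\<lambda>_. borel) (\<lambda>i \<omega>. B (ts (Suc i)) \<omega> - B (ts i) \<omega>) {..<n})"

text \<open>Hitting time tau_y (infinite if y is never hit).\<close>
definition hit_time :: "(real \<Rightarrow> 'a \<Rightarrow> real) \<Rightarrow> 'a \<Rightarrow> real \<Rightarrow> ereal" where
  "hit_time B \<omega> y = Inf {ereal t | t. 0 \<le> t \<and> B t \<omega> = y}"

definition noncross_prob :: "'a measure \<Rightarrow> (real \<Rightarrow> 'a \<Rightarrow> real) \<Rightarrow> (real \<Rightarrow> real) \<Rightarrow> real \<Rightarrow> real" where
  "noncross_prob M B f x =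
     measure M {\<omega>\<in>space M. \<forall>y. ereal (f y - f x) \<le> hit_time B \<omega> y}"

definition neglog :: "real \<Rightarrow> ennreal" where
  "neglog p = (if p \<le> 0 then \<infinity> else ennreal (- ln p))"

text \<open>E(f), where Ms x / Bs x is a Brownian motion started at x.\<close>
definition energy :: "(real \<Rightarrow> 'a measure) \<Rightarrow> (real \<Rightarrow> real \<Rightarrow> 'a \<Rightarrow> real) \<Rightarrow> (real \<Rightarrow> real) \<Rightarrow> ennreal" where
  "energy Ms Bs f = (\<integral>\<^sup>+ x. neglog (noncross_prob (Ms x) (Bs x) f x) \<partial>lborel)"

end

theory Submission
  imports Defs
begin

lemma sup_bound_dense:
  fixes X :: "real \<Rightarrow> real"
  assumes ab: "a < b" and cont: "continuous_on {a..b} X" and bd: "bdd_above (X ` ({a<..<b} \<inter> \<rat>))"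
    and t: "t \<in> {a..b}"
  shows "X t \<le> Sup (X ` ({a<..<b} \<inter> \<rat>))"
proof -
  let ?Q = "{a<..<b} \<inter> \<rat>"
  have "{a<..<b} \<subseteq> closure ?Q"
    using open_Int_closure_subset[of "{a<..<b}" "\<rat>"] Rats_closure_real by auto
  hence "closure {a<..<b} \<subseteq> closure ?Q" by (metis closure_minimal closed_closure)
  hence cl: "{a..b} \<subseteq> closure ?Q" using ab by simp
  have "closure ?Q \<subseteq> {a..b}" by (metis closure_minimal closed_atLeastAtMost Int_lower1 greaterThanLessThan_subseteq_atLeastAtMost_iff order.refl order_trans)
  hence cl2: "closure ?Q = {a..b}" using cl by auto
  have "X ` closure ?Q \<subseteq> {..Sup (X ` ?Q)}"
    by (rule image_closure_subset) (use cont cl2 bd in \<open>auto intro: cSup_upper\<close>)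
  thus ?thesis using t cl2 unfolding image_subset_iff by auto
qed

lemma inf_bound_dense:
  fixes X :: "real \<Rightarrow> real"
  assumes ab: "a < b" and cont: "continuous_on {a..b} X" and bd: "bdd_below (X ` ({a<..<b} \<inter> \<rat>))"
    and t: "t \<in> {a..b}"
  shows "Inf (X ` ({a<..<b} \<inter> \<rat>)) \<le> X t"
proof -
  let ?Q = "{a<..<b} \<inter> \<rat>"
  have "{a<..<b} \<subseteq> closure ?Q"
    using open_Int_closure_subset[of "{a<..<b}" "\<rat>"] Rats_closure_real by auto
  hence "closure {a<..<b} \<subseteq> closure ?Q" by (metis closure_minimal closed_closure)
  hence cl: "{a..b} \<subseteq> closure ?Q" using ab by simp
  have "closure ?Q \<subseteq> {a..b}" by (metis closure_minimal closed_atLeastAtMost Int_lower1 greaterThanLessThan_subseteq_atLeastAtMost_iff order.refl order_trans)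
  hence cl2: "closure ?Q = {a..b}" using cl by auto
  have "X ` closure ?Q \<subseteq> {Inf (X ` ?Q)..}"
    by (rule image_closure_subset) (use cont cl2 bd in \<open>auto intro: cInf_lower\<close>)
  thus ?thesis using t cl2 unfolding image_subset_iff by auto
qed

lemma interval_set_meas:
  fixes B :: "real \<Rightarrow> 'a \<Rightarrow> real"
  assumes meas: "\<And>t. B t \<in> borel_measurable M"
    and cont: "\<And>\<omega>. \<omega> \<in> space M \<Longrightarrow> continuous_on {a..b} (\<lambda>t. B t \<omega>)"
    and ab: "a < b" and L: "is_interval L"
  shows "{\<omega>\<in>space M. \<forall>t\<in>{a..b}. B t \<omega> \<in> L} \<in> sets M"
proof -
  define Q where "Q = {a<..<b} \<inter> \<rat>"
  define mx where "mx \<omega> = Sup ((\<lambda>t. B t \<omega>) ` Q)" for \<omega>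
  define mn where "mn \<omega> = Inf ((\<lambda>t. B t \<omega>) ` Q)" for \<omega>
  obtain q where q: "q \<in> Q" using Rats_dense_in_real[OF ab] unfolding Q_def by auto
  have Qsub: "Q \<subseteq> {a..b}" unfolding Q_def by auto
  have cQ: "countable Q" unfolding Q_def using countable_rat by (meson countable_Int2)
  have key: "(\<forall>t\<in>{a..b}. B t \<omega> \<in> L) \<longleftrightarrow> mn \<omega> \<in> L \<and> mx \<omega> \<in> L"
    and bdd: "bdd_above ((\<lambda>t. B t \<omega>) ` Q)" "bdd_below ((\<lambda>t. B t \<omega>) ` Q)"
    if w: "\<omega> \<in> space M" for \<omega>
  proof -
    obtain t1 where t1: "t1 \<in> {a..b}" "\<forall>y\<in>{a..b}. B y \<omega> \<le> B t1 \<omega>"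
      using continuous_attains_sup[OF compact_Icc _ cont[OF w]] ab by auto
    obtain t0 where t0: "t0 \<in> {a..b}" "\<forall>y\<in>{a..b}. B t0 \<omega> \<le> B y \<omega>"
      using continuous_attains_inf[OF compact_Icc _ cont[OF w]] ab by auto
    show b1: "bdd_above ((\<lambda>t. B t \<omega>) ` Q)" using t1 Qsub by (auto intro!: bdd_aboveI)
    show b2: "bdd_below ((\<lambda>t. B t \<omega>) ` Q)" using t0 Qsub by (auto intro!: bdd_belowI)
    have "mx \<omega> \<le> B t1 \<omega>" unfolding mx_def using q t1 Qsub by (auto intro!: cSup_least)
    moreover have "B t1 \<omega> \<le> mx \<omega>" unfolding mx_def
      using sup_bound_dense[OF ab cont[OF w] b1[unfolded Q_def] t1(1)] Q_def by simp
    ultimately have e1: "mx \<omega> = B t1 \<omega>" by simp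
    have "B t0 \<omega> \<le> mn \<omega>" unfolding mn_def using q t0 Qsub by (auto intro!: cInf_greatest)
    moreover have "mn \<omega> \<le> B t0 \<omega>" unfolding mn_def
      using inf_bound_dense[OF ab cont[OF w] b2[unfolded Q_def] t0(1)] Q_def by simp
    ultimately have e0: "mn \<omega> = B t0 \<omega>" by simp
    show "(\<forall>t\<in>{a..b}. B t \<omega> \<in> L) \<longleftrightarrow> mn \<omega> \<in> L \<and> mx \<omega> \<in> L"
    proof
      assume "\<forall>t\<in>{a..b}. B t \<omega> \<in> L" thus "mn \<omega> \<in> L \<and> mx \<omega> \<in> L" using e0 e1 t0 t1 by auto
    next
      assume h: "mn \<omega> \<in> L \<and> mx \<omega> \<in> L"
      show "\<forall>t\<in>{a..b}. B t \<omega> \<in> L"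
      proof
        fix t assume "t \<in> {a..b}"
        hence "mn \<omega> \<le> B t \<omega>" "B t \<omega> \<le> mx \<omega>" using e0 e1 t0 t1 by auto
        thus "B t \<omega> \<in> L" using h L unfolding is_interval_1 by blast
      qed
    qed
  qed
  have mxm: "mx \<in> borel_measurable M" unfolding mx_def
    by (rule borel_measurable_cSUP[OF cQ meas bdd(1)])
  have mnm: "mn \<in> borel_measurable M" unfolding mn_def
    by (rule borel_measurable_cINF[OF cQ meas bdd(2)])
  have Lb: "L \<in> sets borel" by (rule real_interval_borel_measurable[OF L])
  have "{\<omega>\<in>space M. \<forall>t\<in>{a..b}. B t \<omega> \<in> L} = (mn -` L \<inter> space M) \<inter> (mx -` L \<inter> space M)"
    using key by auto
  also have "\<dots> \<in> sets M"
    using measurable_sets[OF mnm Lb] measurable_sets[OF mxm Lb] by auto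
  finally show ?thesis .
qed

lemma le_eps_nat:
  fixes x y :: real
  assumes "\<And>n::nat. x \<le> y + 1 / (real n + 1)"
  shows "x \<le> y"
proof (rule ccontr)
  assume "\<not> x \<le> y"
  then obtain n where n: "inverse (real (Suc n)) < x - y" using reals_Archimedean by (metis diff_gt_0_iff_gt not_le)
  have "x \<le> y + 1 / (real n + 1)" by (rule assms)
  moreover have "1 / (real n + 1) < x - y" using n by (simp add: inverse_eq_divide add.commute)
  ultimately show False by linarith
qed

lemma hit_set_meas:
  fixes B :: "real \<Rightarrow> 'a \<Rightarrow> real" and h :: "real \<Rightarrow> real"
  assumes meas: "\<And>t. B t \<in> borel_measurable M"
    and cont: "\<And>\<omega>. \<omega> \<in> space M \<Longrightarrow> continuous_on {0..} (\<lambda>t. B t \<omega>)"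
    and L: "\<And>d. is_interval {y. h y \<le> d}"
  shows "{\<omega>\<in>space M. \<forall>t\<ge>0. h (B t \<omega>) \<le> c + t} \<in> sets M"
proof -
  define S where "S n k = {\<omega>\<in>space M. \<forall>t\<in>{real k/(real n+1)..(real k+1)/(real n+1)}.
      B t \<omega> \<in> {y. h y \<le> c + (real k+1)/(real n+1)}}" for n k :: nat
  have Sm: "S n k \<in> sets M" for n k unfolding S_def
  proof (rule interval_set_meas[OF meas _ _ L])
    fix \<omega> assume "\<omega> \<in> space M"
    thus "continuous_on {real k / (real n + 1)..(real k + 1) / (real n + 1)} (\<lambda>t. B t \<omega>)"
      by (rule continuous_on_subset[OF cont]) auto
  qed (simp add: divide_strict_right_mono)
  have eq: "{\<omega>\<in>space M. \<forall>t\<ge>0. h (B t \<omega>) \<le> c + t} = (\<Inter>n. \<Inter>k. S n k)"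
  proof (intro equalityI subsetI)
    fix \<omega> assume "\<omega> \<in> {\<omega>\<in>space M. \<forall>t\<ge>0. h (B t \<omega>) \<le> c + t}"
    hence w: "\<omega> \<in> space M" "\<And>t. t \<ge> 0 \<Longrightarrow> h (B t \<omega>) \<le> c + t" by auto
    show "\<omega> \<in> (\<Inter>n. \<Inter>k. S n k)" unfolding S_def
    proof (clarsimp simp: w(1))
      fix n k :: nat and t :: real
      assume t: "real k / (real n + 1) \<le> t" "t \<le> (real k + 1) / (real n + 1)"
      have "0 \<le> t" using t(1) by (smt (verit) divide_nonneg_nonneg of_nat_0_le_iff)
      thus "h (B t \<omega>) \<le> c + (real k + 1) / (real n + 1)" using w(2)[of t] t(2) by linarith
    qed
  next
    fix \<omega> assume "\<omega> \<in> (\<Inter>n. \<Inter>k. S n k)"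
    hence w: "\<omega> \<in> space M" and all: "\<And>n k t. t \<in> {real k/(real n+1)..(real k+1)/(real n+1)} \<Longrightarrow>
        h (B t \<omega>) \<le> c + (real k+1)/(real n+1)" unfolding S_def by auto
    have "h (B t \<omega>) \<le> c + t" if t0: "t \<ge> 0" for t
    proof (rule le_eps_nat)
      fix n :: nat
      define k where "k = nat (floor (t * (real n + 1)))"
      have fl: "real k = of_int (floor (t * (real n + 1)))" unfolding k_def using t0 by simp
      have k1: "real k \<le> t * (real n + 1)" using fl by linarith
      have k2: "t * (real n + 1) < real k + 1" using fl by linarith
      have p: "real n + 1 > 0" by simp
      have "t \<in> {real k/(real n+1)..(real k+1)/(real n+1)}"
        using k1 k2 p by (simp add: field_simps)
      hence "h (B t \<omega>) \<le> c + (real k+1)/(real n+1)" by (rule all)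
      also have "(real k+1)/(real n+1) \<le> t + 1 / (real n + 1)"
      proof -
        have "real k/(real n+1) \<le> t" using k1 p by (simp add: divide_le_eq mult.commute)
        moreover have "(real k+1)/(real n+1) = real k/(real n+1) + 1/(real n+1)" by (simp add: add_divide_distrib)
        ultimately show ?thesis by linarith
      qed
      finally show "h (B t \<omega>) \<le> c + t + 1 / (real n + 1)" by simp
    qed
    thus "\<omega> \<in> {\<omega>\<in>space M. \<forall>t\<ge>0. h (B t \<omega>) \<le> c + t}" using w by auto
  qed
  show ?thesis unfolding eq using Sm by auto
qed

definition contr :: "(real \<Rightarrow> real) \<Rightarrow> (real \<Rightarrow> real) \<Rightarrow> bool" where
  "contr f g \<longleftrightarrow> (\<forall>x y. max 0 (g x - g y) \<le> max 0 (f x - f y))"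

lemma contr_trans: "contr f g \<Longrightarrow> contr g h \<Longrightarrow> contr f h"
  unfolding contr_def by (metis order_trans)

lemma phi_contr:
  fixes m M a b :: real
  assumes "m \<le> M"
  shows "max 0 ((if m \<le> a \<and> a \<le> M then m else if a < m then a else a - (M - m))
             - (if m \<le> b \<and> b \<le> M then m else if b < m then b else b - (M - m))) \<le> max 0 (a - b)"
  using assms by (smt (verit))

lemma sd_step_props:
  fixes g :: "real \<Rightarrow> real"
  assumes ne: "I \<noteq> {}" and ba: "bdd_above (g ` I)" and bb: "bdd_below (g ` I)"
  shows "contr g (sd_step I g)" "\<forall>x. sd_step I g x \<ge> g x - DeltaI I g"
    "\<forall>x\<in>I. sd_step I g x = infI I g" "infI I g \<le> supI I g"
proof -
  obtain x0 where x0: "x0 \<in> I" using ne by auto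
  have "infI I g \<le> g x0" unfolding infI_def using x0 bb by (auto intro: cInf_lower)
  moreover have "g x0 \<le> supI I g" unfolding supI_def using x0 ba by (auto intro: cSup_upper)
  ultimately show le: "infI I g \<le> supI I g" by simp
  show "contr g (sd_step I g)" unfolding contr_def sd_step_def DeltaI_def
    by (intro allI, rule phi_contr[OF le])
  show "\<forall>x. sd_step I g x \<ge> g x - DeltaI I g"
  proof
    fix x show "sd_step I g x \<ge> g x - DeltaI I g" unfolding sd_step_def DeltaI_def using le by (smt (verit))
  qed
  show "\<forall>x\<in>I. sd_step I g x = infI I g"
  proof
    fix x assume x: "x \<in> I"
    have "Inf (g ` I) \<le> g x" by (rule cInf_lower) (use x bb in auto)
    moreover have "g x \<le> Sup (g ` I)" by (rule cSup_upper) (use x ba in auto)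
    ultimately show "sd_step I g x = infI I g" unfolding sd_step_def infI_def supI_def by simp
  qed
qed

lemma foldl_take_Suc:
  "k < length Is \<Longrightarrow> soft_deform (take (Suc k) Is) f = sd_step (Is ! k) (soft_deform (take k Is) f)"
  unfolding soft_deform_def by (subst take_Suc_conv_app_nth) simp_all

lemma main_comb:
  fixes f :: "real \<Rightarrow> real"
  assumes f01: "\<And>x. 0 \<le> f x \<and> f x \<le> 1" and ne: "\<And>k. k < length Is \<Longrightarrow> Is ! k \<noteq> {}"
  shows "k \<le> length Is \<Longrightarrow> contr f (soft_deform (take k Is) f)
    \<and> (\<forall>x. soft_deform (take k Is) f x \<ge> f x - (\<Sum>j<k. DeltaI (Is ! j) f))
    \<and> (\<forall>j<k. \<forall>x\<in>Is ! j. \<forall>y\<in>Is ! j. soft_deform (take k Is) f x = soft_deform (take k Is) f y)"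
proof (induction k)
  case 0
  then show ?case by (simp add: soft_deform_def contr_def)
next
  case (Suc k)
  let ?g = "soft_deform (take k Is) f"
  let ?I = "Is ! k"
  have kl: "k < length Is" using Suc by simp
  note IHc = Suc.IH[OF Suc_leD[OF Suc.prems]]
  have IH1: "contr f ?g" by (rule conjunct1[OF IHc])
  have IH2: "\<forall>x. ?g x \<ge> f x - (\<Sum>j<k. DeltaI (Is ! j) f)" by (rule conjunct1[OF conjunct2[OF IHc]])
  have IH3: "\<forall>j<k. \<forall>x\<in>Is ! j. \<forall>y\<in>Is ! j. ?g x = ?g y" by (rule conjunct2[OF conjunct2[OF IHc]])
  note IH = IH1 IH2 IH3
  have neI: "?I \<noteq> {}" using ne kl by simp
  then obtain x0 where x0: "x0 \<in> ?I" by auto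
  have gd: "?g x - ?g y \<le> max 0 (f x - f y)" for x y
    using IH(1) unfolding contr_def by (metis max.cobounded2 order_trans)
  have "?g y \<le> ?g x0 + 1" for y using gd[of y x0] f01[of y] f01[of x0] by linarith
  hence ba: "bdd_above (?g ` ?I)" by (rule bdd_aboveI2)
  have "?g x0 - 1 \<le> ?g y" for y using gd[of x0 y] f01[of y] f01[of x0] by linarith
  hence bb: "bdd_below (?g ` ?I)" by (rule bdd_belowI2)
  have fba: "bdd_above (f ` ?I)" "bdd_below (f ` ?I)" using f01 by (metis bdd_aboveI2) (metis f01 bdd_belowI2)
  note st = sd_step_props[OF neI ba bb]
  note fst = sd_step_props[OF neI fba]
  have eqs: "soft_deform (take (Suc k) Is) f = sd_step ?I ?g" by (rule foldl_take_Suc[OF kl])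
  have Dle: "DeltaI ?I ?g \<le> DeltaI ?I f"
  proof -
    let ?D = "DeltaI ?I f"
    have D0: "0 \<le> ?D" using fst(4) unfolding DeltaI_def by simp
    have xy: "?g x - ?g y \<le> ?D" if "x \<in> ?I" "y \<in> ?I" for x y
    proof -
      have "f x \<le> supI ?I f" unfolding supI_def using that fba by (auto intro: cSup_upper)
      moreover have "infI ?I f \<le> f y" unfolding infI_def using that fba by (auto intro: cInf_lower)
      ultimately have "max 0 (f x - f y) \<le> ?D" using D0 unfolding DeltaI_def by simp
      thus ?thesis using gd[of x y] by linarith
    qed
    have "?g x - ?D \<le> infI ?I ?g" if xI: "x \<in> ?I" for x
      unfolding infI_def
    proof (rule cINF_greatest[OF neI])
      fix y assume yI: "y \<in> ?I"
      show "?g x - ?D \<le> ?g y" using xy[OF xI yI] by linarith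
    qed
    hence "supI ?I ?g \<le> infI ?I ?g + ?D"
      unfolding supI_def using neI by (auto intro!: cSUP_least simp: algebra_simps)
    thus ?thesis unfolding DeltaI_def by simp
  qed
  have c: "contr f (sd_step ?I ?g)" by (rule contr_trans[OF IH(1) st(1)])
  have lb: "\<forall>x. sd_step ?I ?g x \<ge> f x - (\<Sum>j<Suc k. DeltaI (Is ! j) f)"
    using st(2) IH(2) Dle by (smt (verit) sum.lessThan_Suc)
  have keep: "sd_step ?I ?g x = sd_step ?I ?g y" if exy: "?g x = ?g y" for x y
  proof -
    have a: "max 0 (sd_step ?I ?g x - sd_step ?I ?g y) \<le> max 0 (?g x - ?g y)" using st(1) unfolding contr_def by blast
    have b: "max 0 (sd_step ?I ?g y - sd_step ?I ?g x) \<le> max 0 (?g y - ?g x)" using st(1) unfolding contr_def by blast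
    from a b exy show ?thesis by simp
  qed
  have const: "\<forall>j<Suc k. \<forall>x\<in>Is ! j. \<forall>y\<in>Is ! j. sd_step ?I ?g x = sd_step ?I ?g y"
  proof (intro allI impI ballI)
    fix j x y assume j: "j < Suc k" and xy: "x \<in> Is ! j" "y \<in> Is ! j"
    show "sd_step ?I ?g x = sd_step ?I ?g y"
    proof (cases "j < k")
      case True thus ?thesis using IH3 xy keep by blast
    next
      case False hence "j = k" using j by simp
      thus ?thesis using st(3) xy by simp
    qed
  qed
  show ?case unfolding eqs by (intro conjI c lb const)
qed

lemma neglog_anti: "p \<le> q \<Longrightarrow> neglog q \<le> neglog p"
  unfolding neglog_def by (auto intro!: ennreal_leI)

lemma hit_eq:
  "{\<omega>\<in>space M. \<forall>y. ereal (h y - h x) \<le> hit_time B \<omega> y}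
   = {\<omega>\<in>space M. \<forall>t\<ge>0. h (B t \<omega>) \<le> h x + t}"
proof -
  have "(\<forall>y. ereal (h y - h x) \<le> hit_time B \<omega> y) \<longleftrightarrow> (\<forall>t\<ge>0. h (B t \<omega>) \<le> h x + t)" for \<omega>
  proof
    assume H: "\<forall>y. ereal (h y - h x) \<le> hit_time B \<omega> y"
    show "\<forall>t\<ge>0. h (B t \<omega>) \<le> h x + t"
    proof (intro allI impI)
      fix t :: real assume t: "0 \<le> t"
      have "ereal (h (B t \<omega>) - h x) \<le> hit_time B \<omega> (B t \<omega>)" using H by blast
      also have "hit_time B \<omega> (B t \<omega>) \<le> ereal t" unfolding hit_time_def
        by (rule Inf_lower) (use t in blast)
      finally show "h (B t \<omega>) \<le> h x + t" by simp
    qed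
  next
    assume H: "\<forall>t\<ge>0. h (B t \<omega>) \<le> h x + t"
    show "\<forall>y. ereal (h y - h x) \<le> hit_time B \<omega> y"
    proof
      fix y show "ereal (h y - h x) \<le> hit_time B \<omega> y" unfolding hit_time_def
      proof (rule Inf_greatest)
        fix z assume "z \<in> {ereal t |t. 0 \<le> t \<and> B t \<omega> = y}"
        then obtain t where "z = ereal t" "0 \<le> t" "B t \<omega> = y" by blast
        thus "ereal (h y - h x) \<le> z" using H by force
      qed
    qed
  qed
  thus ?thesis by auto
qed

theorem lemma6p2:
  fixes f :: "real \<Rightarrow> real" and Is :: "real set list"
    and Ms :: "real \<Rightarrow> 'a measure" and Bs :: "real \<Rightarrow> real \<Rightarrow> 'a \<Rightarrow> real"
  assumes f: "classC1 f"
    and intervals: "\<forall>k<length Is. nondeg_interval (Is ! k)"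
    and disjoint: "\<forall>i<length Is. \<forall>j<length Is. i \<noteq> j \<longrightarrow> Is ! i \<inter> Is ! j = {}"
    and BM: "\<forall>x. is_BM (Ms x) (Bs x) x"
  shows "(\<forall>k<length Is. \<forall>x\<in>Is ! k. \<forall>y\<in>Is ! k. soft_deform Is f x = soft_deform Is f y)
    \<and> (\<forall>x. soft_deform Is f x \<ge> f x - (\<Sum>k<length Is. DeltaI (Is ! k) f))
    \<and> (\<forall>x y. max 0 (soft_deform Is f x - soft_deform Is f y) \<le> max 0 (f x - f y))
    \<and> energy Ms Bs (soft_deform Is f) \<le> energy Ms Bs f"
proof -
  let ?g = "soft_deform Is f"
  have f01: "\<And>x. 0 \<le> f x \<and> f x \<le> 1" using f unfolding classC1_def by auto
  have ne: "Is ! k \<noteq> {}" if "k < length Is" for k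
  proof -
    have nd: "nondeg_interval (Is ! k)" using intervals that by simp
    obtain a b where ab: "a < b" "{a<..<b} \<subseteq> Is ! k"
      using nd unfolding nondeg_interval_def by (elim conjE exE) simp
    have "(a + b) / 2 \<in> {a<..<b}" using ab(1) by auto
    thus ?thesis using ab(2) by blast
  qed
  have mc: "contr f ?g \<and> (\<forall>x. ?g x \<ge> f x - (\<Sum>j<length Is. DeltaI (Is ! j) f))
    \<and> (\<forall>j<length Is. \<forall>x\<in>Is ! j. \<forall>y\<in>Is ! j. ?g x = ?g y)"
  proof -
    have tk: "take (length Is) Is = Is" by simp
    show ?thesis using main_comb[OF f01 ne order_refl] unfolding tk .
  qed
  hence c: "contr f ?g" by blast
  have fg: "?g a \<le> ?g b" if fab: "f a \<le> f b" for a b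
  proof -
    have "max 0 (?g a - ?g b) \<le> max 0 (f a - f b)" using c unfolding contr_def by blast
    moreover have "max 0 (f a - f b) = 0" using fab by simp
    ultimately show ?thesis by simp
  qed
  have fa: "antimono_on {..0} f" and fm: "mono_on {0..} f" using f unfolding classC1_def by auto
  have L: "is_interval {y. ?g y \<le> d}" for d
    unfolding is_interval_1
  proof (intro ballI allI impI)
    fix a b x assume a: "a \<in> {y. ?g y \<le> d}" and b: "b \<in> {y. ?g y \<le> d}" and x: "a \<le> x \<and> x \<le> b"
    show "x \<in> {y. ?g y \<le> d}"
    proof (cases "0 \<le> x")
      case True
      hence "f x \<le> f b" using mono_onD[OF fm, of x b] x by auto
      thus ?thesis using fg[of x b] b by auto
    next
      case False
      hence "f x \<le> f a" using monotone_onD[OF fa, of a x] x by auto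
      thus ?thesis using fg[of x a] a by auto
    qed
  qed
  have np: "noncross_prob (Ms x) (Bs x) f x \<le> noncross_prob (Ms x) (Bs x) ?g x" for x
  proof -
    have bm: "is_BM (Ms x) (Bs x) x" using BM by blast
    hence ps: "prob_space (Ms x)" and meas: "\<And>t. Bs x t \<in> borel_measurable (Ms x)"
      and cont: "\<And>\<omega>. \<omega> \<in> space (Ms x) \<Longrightarrow> continuous_on {0..} (\<lambda>t. Bs x t \<omega>)"
      unfolding is_BM_def by auto
    have sub: "{\<omega>\<in>space (Ms x). \<forall>t\<ge>0. f (Bs x t \<omega>) \<le> f x + t}
        \<subseteq> {\<omega>\<in>space (Ms x). \<forall>t\<ge>0. ?g (Bs x t \<omega>) \<le> ?g x + t}"
    proof
      fix \<omega> assume w: "\<omega> \<in> {\<omega>\<in>space (Ms x). \<forall>t\<ge>0. f (Bs x t \<omega>) \<le> f x + t}"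
      have "?g (Bs x t \<omega>) \<le> ?g x + t" if t: "0 \<le> t" for t
      proof -
        have "f (Bs x t \<omega>) - f x \<le> t" using w t by auto
        moreover have "max 0 (?g (Bs x t \<omega>) - ?g x) \<le> max 0 (f (Bs x t \<omega>) - f x)"
          using c unfolding contr_def by blast
        ultimately show ?thesis using t by linarith
      qed
      thus "\<omega> \<in> {\<omega>\<in>space (Ms x). \<forall>t\<ge>0. ?g (Bs x t \<omega>) \<le> ?g x + t}" using w by auto
    qed
    have sm: "{\<omega>\<in>space (Ms x). \<forall>t\<ge>0. ?g (Bs x t \<omega>) \<le> ?g x + t} \<in> sets (Ms x)"
      by (rule hit_set_meas[OF meas cont L])
    show ?thesis unfolding noncross_prob_def hit_eq
      by (rule finite_measure.finite_measure_mono[OF prob_space.axioms(1)[OF ps] sub sm])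
  qed
  have en: "energy Ms Bs ?g \<le> energy Ms Bs f"
    unfolding energy_def by (rule nn_integral_mono) (rule neglog_anti[OF np])
  show ?thesis using mc c en unfolding contr_def by blast
qed

end
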